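(* Let $\mathcal{R}_i=(X_i,\Phi_i,\check X_i,\check\Phi_i)$, $i\in\{1,2\}$, be root data and $f:\mathcal{R}_2\to\mathcal{R}_1$ a homomorphism of root data with $f:X_2\to X_1$ surjective. Put $A=X_1/f(\Phi_2^\top)$, let $h_1:X_1\to A$ be the natural projection and $h_2:X_2/\Phi_2^\top\to A$, $h_2(x+\Phi_2^\top)=f(x)+f(\Phi_2^\top)$. Then $\phi:X_2\to X_1\oplus(X_2/\Phi_2^\top)$, $\phi(x)=(f(x),x+\Phi_2^\top)$, defines an isomorphism of root data $\phi:\mathcal{R}_2\to\mathcal{R}_1\oplus_{(A,h_1,h_2)}(\mathcal{R}_2)_{\mathrm{rad}}$, and $f=p_1\circ\phi$, where $p_1$ is the projection of the central product onto its first factor.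
   Context: Root data $\mathcal{R}=(X,\Phi,\check X,\check\Phi)$ (reduced), with perfect pairing $\langle-,-\rangle$. A homomorphism of root data $\mathcal{R}'\to\mathcal{R}$ is a $\mathbb{Z}$-linear $f:X'\to X$ with a bijection $\tau:\Phi\to\Phi'$ with $f(\tau(\alpha))=\alpha$ and $\check f(\check\alpha)=\tau(\alpha)^\vee$ ($\check f$ the transpose). For $S\subseteq X$: $S^\top=\{x\in X: nx\in\mathbb{Z}S\text{ for some integer }n>0\}$, $S^\perp=\{y\in\check X:\langle x,y\rangle=0\ \forall x\in S\}$; similarly for subsets of $\check X$. The radical of $\mathcal{R}$ is the torus (root datum with no roots) $\mathcal{R}_{\mathrm{rad}}=(X/\Phi^\top,\emptyset,\check\Phi^\perp,\emptyset)$ with induced pairing. For a submodule $B\subseteq X$ containing $\Phi$, the induced root datum is $\mathcal{R}_B=(B,\Phi,\mathrm{Hom}(B,\mathbb{Z}),\check\iota_B(\check\Phi))$, $\check\iota_B(y)=\langle-,y\rangle|_B$. Central product: for root data $\mathcal{R},\mathcal{R}'$ with lattices $X,X'$, a $\mathbb{Z}$-module $A$ and surjections $h:X\to A$, $h':X'\to A$ killing the roots, $\mathcal{R}\oplus_{(A,h,h')}\mathcal{R}'$ is the root datum induced from the direct sum $\mathcal{R}\oplus\mathcal{R}'$ by the submodule $X\oplus_A X'=\{(x,x'): h(x)=h'(x')\}$. *)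

theory Defs
  imports "HOL-Algebra.Algebra"
begin

text \<open>Lattices (free Z-modules of finite rank) are modelled as commutative groups in
  HOL-Algebra (written multiplicatively), with a finite Z-basis.\<close>

record ('x, 'y) root_datum =
  lat :: "'x monoid"
  roots :: "'x set"
  colat :: "'y monoid"
  coroot :: "'x \<Rightarrow> 'y"
  pairing :: "'x \<Rightarrow> 'y \<Rightarrow> int"

definition free_lattice :: "'x monoid \<Rightarrow> bool" where
  "free_lattice G \<longleftrightarrow> comm_group G \<and>
     (\<exists>(b::nat \<Rightarrow> 'x) n. b ` {..<n} \<subseteq> carrier G \<and>
        bij_betw (\<lambda>c. finprod G (\<lambda>i. b i [^]\<^bsub>G\<^esub> (c i :: int)) {..<n})
                 {c::nat \<Rightarrow> int. \<forall>i\<ge>n. c i = 0} (carrier G))"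

definition perfect_pairing :: "'x monoid \<Rightarrow> 'y monoid \<Rightarrow> ('x \<Rightarrow> 'y \<Rightarrow> int) \<Rightarrow> bool" where
  "perfect_pairing LX LY p \<longleftrightarrow>
     (\<forall>x\<in>carrier LX. \<forall>x'\<in>carrier LX. \<forall>y\<in>carrier LY. p (x \<otimes>\<^bsub>LX\<^esub> x') y = p x y + p x' y) \<and>
     (\<forall>x\<in>carrier LX. \<forall>y\<in>carrier LY. \<forall>y'\<in>carrier LY. p x (y \<otimes>\<^bsub>LY\<^esub> y') = p x y + p x y') \<and>
     (\<forall>\<phi>\<in>hom LY integer_group. \<exists>!x. x \<in> carrier LX \<and> (\<forall>y\<in>carrier LY. p x y = \<phi> y)) \<and>
     (\<forall>\<psi>\<in>hom LX integer_group. \<exists>!y. y \<in> carrier LY \<and> (\<forall>x\<in>carrier LX. p x y = \<psi> x))"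

definition coroots :: "('x, 'y) root_datum \<Rightarrow> 'y set" where
  "coroots R = coroot R ` roots R"

definition is_root_datum :: "('x, 'y) root_datum \<Rightarrow> bool" where
  "is_root_datum R \<longleftrightarrow>
     free_lattice (lat R) \<and> free_lattice (colat R) \<and>
     perfect_pairing (lat R) (colat R) (pairing R) \<and>
     finite (roots R) \<and> roots R \<subseteq> carrier (lat R) \<and> coroots R \<subseteq> carrier (colat R) \<and>
     inj_on (coroot R) (roots R) \<and>
     (\<forall>\<alpha>\<in>roots R. pairing R \<alpha> (coroot R \<alpha>) = 2) \<and>
     (\<forall>\<alpha>\<in>roots R. \<forall>\<beta>\<in>roots R.
        \<beta> \<otimes>\<^bsub>lat R\<^esub> (\<alpha> [^]\<^bsub>lat R\<^esub> (- pairing R \<beta> (coroot R \<alpha>))) \<in> roots R) \<and>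
     (\<forall>\<alpha>\<in>roots R. \<forall>\<beta>\<in>roots R.
        coroot R \<beta> \<otimes>\<^bsub>colat R\<^esub> (coroot R \<alpha> [^]\<^bsub>colat R\<^esub> (- pairing R \<alpha> (coroot R \<beta>)))
          \<in> coroots R)"

definition is_reduced_root_datum :: "('x, 'y) root_datum \<Rightarrow> bool" where
  "is_reduced_root_datum R \<longleftrightarrow> is_root_datum R \<and>
     (\<forall>\<alpha>\<in>roots R. \<forall>n::int. \<alpha> [^]\<^bsub>lat R\<^esub> n \<in> roots R \<longrightarrow> n = 1 \<or> n = -1)"

definition transpose ::
  "('x', 'y') root_datum \<Rightarrow> ('x, 'y) root_datum \<Rightarrow> ('x' \<Rightarrow> 'x) \<Rightarrow> 'y \<Rightarrow> 'y'" where
  "transpose R' R f y = (THE y'. y' \<in> carrier (colat R') \<and>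
       (\<forall>x\<in>carrier (lat R'). pairing R' x y' = pairing R (f x) y))"

definition root_hom ::
  "('x', 'y') root_datum \<Rightarrow> ('x, 'y) root_datum \<Rightarrow> ('x' \<Rightarrow> 'x) \<Rightarrow> ('x \<Rightarrow> 'x') \<Rightarrow> bool" where
  "root_hom R' R f \<tau> \<longleftrightarrow> f \<in> hom (lat R') (lat R) \<and> bij_betw \<tau> (roots R) (roots R') \<and>
     (\<forall>\<alpha>\<in>roots R. f (\<tau> \<alpha>) = \<alpha> \<and> transpose R' R f (coroot R \<alpha>) = coroot R' (\<tau> \<alpha>))"

definition root_iso ::
  "('x', 'y') root_datum \<Rightarrow> ('x, 'y) root_datum \<Rightarrow> ('x' \<Rightarrow> 'x) \<Rightarrow> ('x \<Rightarrow> 'x') \<Rightarrow> bool" where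
  "root_iso R' R f \<tau> \<longleftrightarrow> root_hom R' R f \<tau> \<and> bij_betw f (carrier (lat R')) (carrier (lat R))"

definition span_top :: "'x monoid \<Rightarrow> 'x set \<Rightarrow> 'x set" where
  "span_top G S = {x \<in> carrier G. \<exists>n::nat. n > 0 \<and> x [^]\<^bsub>G\<^esub> n \<in> generate G S}"

definition rad :: "('x, 'y) root_datum \<Rightarrow> ('x set, 'y) root_datum" where
  "rad R = \<lparr> lat = lat R Mod span_top (lat R) (roots R),
             roots = {},
             colat = (colat R)\<lparr>carrier := {y \<in> carrier (colat R). \<forall>\<alpha>\<in>roots R. pairing R \<alpha> y = 0}\<rparr>,
             coroot = (\<lambda>_. \<one>\<^bsub>colat R\<^esub>),
             pairing = (\<lambda>C y. pairing R (SOME x. x \<in> C) y) \<rparr>"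

definition dsum :: "('x, 'y) root_datum \<Rightarrow> ('x', 'y') root_datum \<Rightarrow> ('x \<times> 'x', 'y \<times> 'y') root_datum" where
  "dsum R R' = \<lparr> lat = lat R \<times>\<times> lat R',
      roots = (\<lambda>a. (a, \<one>\<^bsub>lat R'\<^esub>)) ` roots R \<union> (\<lambda>a. (\<one>\<^bsub>lat R\<^esub>, a)) ` roots R',
      colat = colat R \<times>\<times> colat R',
      coroot = (\<lambda>(a, b). if a \<in> roots R \<and> b = \<one>\<^bsub>lat R'\<^esub>
                          then (coroot R a, \<one>\<^bsub>colat R'\<^esub>) else (\<one>\<^bsub>colat R\<^esub>, coroot R' b)),
      pairing = (\<lambda>(x, x') (y, y'). pairing R x y + pairing R' x' y') \<rparr>"

definition dual_group :: "'x monoid \<Rightarrow> ('x \<Rightarrow> int) monoid" where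
  "dual_group G = \<lparr> carrier = {\<phi>. \<phi> \<in> hom G integer_group \<and> (\<forall>b. b \<notin> carrier G \<longrightarrow> \<phi> b = 0)},
                    monoid.mult = (\<lambda>\<phi> \<psi> b. \<phi> b + \<psi> b),
                    one = (\<lambda>_. 0) \<rparr>"

definition induced :: "('x, 'y) root_datum \<Rightarrow> 'x set \<Rightarrow> ('x, 'x \<Rightarrow> int) root_datum" where
  "induced R B = \<lparr> lat = (lat R)\<lparr>carrier := B\<rparr>,
                   roots = roots R,
                   colat = dual_group ((lat R)\<lparr>carrier := B\<rparr>),
                   coroot = (\<lambda>\<alpha> b. if b \<in> B then pairing R b (coroot R \<alpha>) else 0),
                   pairing = (\<lambda>b \<phi>. \<phi> b) \<rparr>"

definition central_prod ::
  "('x, 'y) root_datum \<Rightarrow> ('x', 'y') root_datum \<Rightarrow> 'z monoid \<Rightarrow> ('x \<Rightarrow> 'z) \<Rightarrow> ('x' \<Rightarrow> 'z)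
     \<Rightarrow> ('x \<times> 'x', ('x \<times> 'x') \<Rightarrow> int) root_datum" where
  "central_prod R R' A h h' =
     induced (dsum R R') {(x, x'). x \<in> carrier (lat R) \<and> x' \<in> carrier (lat R') \<and> h x = h' x'}"

end

theory Submission
  imports Defs
begin

locale rdat =
  fixes R :: "('x, 'y) root_datum"
  assumes RD: "is_root_datum R"
begin


lemma cgX: "comm_group (lat R)" using RD by (simp add: is_root_datum_def free_lattice_def)
lemma cgY: "comm_group (colat R)" using RD by (simp add: is_root_datum_def free_lattice_def)
lemma gX: "group (lat R)" using cgX comm_group.axioms(2) by blast
lemma gY: "group (colat R)" using cgY comm_group.axioms(2) by blast
lemma PP: "perfect_pairing (lat R) (colat R) (pairing R)" using RD by (simp add: is_root_datum_def)
lemma roots_sub: "roots R \<subseteq> carrier (lat R)" using RD by (simp add: is_root_datum_def)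
lemma coroots_sub: "coroot R \<alpha> \<in> carrier (colat R)" if "\<alpha> \<in> roots R"
  using RD that by (auto simp add: is_root_datum_def coroots_def)
lemma fin: "finite (roots R)" using RD by (simp add: is_root_datum_def)
lemma p_two: "\<alpha> \<in> roots R \<Longrightarrow> pairing R \<alpha> (coroot R \<alpha>) = 2" using RD by (simp add: is_root_datum_def)
lemma refl_in: "\<alpha> \<in> roots R \<Longrightarrow> \<beta> \<in> roots R \<Longrightarrow>
   \<beta> \<otimes>\<^bsub>(lat R)\<^esub> (\<alpha> [^]\<^bsub>(lat R)\<^esub> (- pairing R \<beta> (coroot R \<alpha>))) \<in> roots R"
  using RD by (simp add: is_root_datum_def)

lemma hom1: "y \<in> carrier (colat R) \<Longrightarrow> (\<lambda>x. pairing R x y) \<in> hom (lat R) integer_group"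
  using PP by (auto simp: perfect_pairing_def hom_def)
lemma hom2: "x \<in> carrier (lat R) \<Longrightarrow> (\<lambda>y. pairing R x y) \<in> hom (colat R) integer_group"
  using PP by (auto simp: perfect_pairing_def hom_def)

lemma p_mult1: "x \<in> carrier (lat R) \<Longrightarrow> x' \<in> carrier (lat R) \<Longrightarrow> y \<in> carrier (colat R) \<Longrightarrow> pairing R (x \<otimes>\<^bsub>(lat R)\<^esub> x') y = pairing R x y + pairing R x' y"
  using PP by (auto simp: perfect_pairing_def)
lemma p_mult2: "x \<in> carrier (lat R) \<Longrightarrow> y \<in> carrier (colat R) \<Longrightarrow> y' \<in> carrier (colat R) \<Longrightarrow> pairing R x (y \<otimes>\<^bsub>(colat R)\<^esub> y') = pairing R x y + pairing R x y'"
  using PP by (auto simp: perfect_pairing_def)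
lemma p_ipow1: "x \<in> carrier (lat R) \<Longrightarrow> y \<in> carrier (colat R) \<Longrightarrow> pairing R (x [^]\<^bsub>(lat R)\<^esub> (k::int)) y = k * pairing R x y"
  using hom_int_pow[of "\<lambda>x. pairing R x y" "lat R" integer_group x k] hom1[of y] gX by simp
lemma p_npow1: "x \<in> carrier (lat R) \<Longrightarrow> y \<in> carrier (colat R) \<Longrightarrow> pairing R (x [^]\<^bsub>(lat R)\<^esub> (k::nat)) y = int k * pairing R x y"
  using hom_nat_pow[of "\<lambda>x. pairing R x y" "lat R" integer_group x k] hom1[of y] gX by simp
lemma p_ipow2: "x \<in> carrier (lat R) \<Longrightarrow> y \<in> carrier (colat R) \<Longrightarrow> pairing R x (y [^]\<^bsub>(colat R)\<^esub> (k::int)) = k * pairing R x y"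
  using hom_int_pow[of "\<lambda>y. pairing R x y" "colat R" integer_group y k] hom2[of x] gY by simp
lemma p_inv1: "x \<in> carrier (lat R) \<Longrightarrow> y \<in> carrier (colat R) \<Longrightarrow> pairing R (inv\<^bsub>(lat R)\<^esub> x) y = - pairing R x y"
  using group_hom.hom_inv[of "lat R" integer_group "\<lambda>x. pairing R x y" x] hom1[of y] gX
  by (simp add: group_hom_def group_hom_axioms_def)
lemma p_inv2: "x \<in> carrier (lat R) \<Longrightarrow> y \<in> carrier (colat R) \<Longrightarrow> pairing R x (inv\<^bsub>(colat R)\<^esub> y) = - pairing R x y"
  using group_hom.hom_inv[of "colat R" integer_group "\<lambda>y. pairing R x y" y] hom2[of x] gY
  by (simp add: group_hom_def group_hom_axioms_def)
lemma p_one1: "y \<in> carrier (colat R) \<Longrightarrow> pairing R \<one>\<^bsub>(lat R)\<^esub> y = 0"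
  using group_hom.hom_one[of "lat R" integer_group "\<lambda>x. pairing R x y"] hom1[of y] gX
  by (simp add: group_hom_def group_hom_axioms_def)
lemma p_one2: "x \<in> carrier (lat R) \<Longrightarrow> pairing R x \<one>\<^bsub>(colat R)\<^esub> = 0"
  using group_hom.hom_one[of "colat R" integer_group "\<lambda>y. pairing R x y"] hom2[of x] gY
  by (simp add: group_hom_def group_hom_axioms_def)

lemma nondeg: assumes "x \<in> carrier (lat R)" "\<And>y. y \<in> carrier (colat R) \<Longrightarrow> pairing R x y = 0" shows "x = \<one>\<^bsub>(lat R)\<^esub>"
proof -
  have h: "(\<lambda>_. 0::int) \<in> hom (colat R) integer_group" by (simp add: hom_def)
  then have "\<exists>!x. x \<in> carrier (lat R) \<and> (\<forall>y\<in>carrier (colat R). pairing R x y = 0)" using PP by (auto simp: perfect_pairing_def)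
  moreover have "\<one>\<^bsub>(lat R)\<^esub> \<in> carrier (lat R) \<and> (\<forall>y\<in>carrier (colat R). pairing R \<one>\<^bsub>(lat R)\<^esub> y = 0)" using p_one1 gX by (simp add: group.is_monoid monoid.one_closed)
  ultimately show ?thesis using assms by blast
qed


definition sr where "sr \<alpha> \<gamma> = \<gamma> \<otimes>\<^bsub>lat R\<^esub> \<alpha> [^]\<^bsub>lat R\<^esub> (- pairing R \<gamma> (coroot R \<alpha>))"
definition Bv where "Bv u y = (\<Sum>\<gamma>\<in>roots R. pairing R \<gamma> u * pairing R \<gamma> y)"

lemma sr_closed: "\<alpha> \<in> roots R \<Longrightarrow> \<gamma> \<in> carrier (lat R) \<Longrightarrow> sr \<alpha> \<gamma> \<in> carrier (lat R)"
  unfolding sr_def using roots_sub gX by (meson group.int_pow_closed monoid.m_closed group.is_monoid subsetD)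

lemma sr_pair: assumes "\<alpha> \<in> roots R" "\<gamma> \<in> carrier (lat R)" "y \<in> carrier (colat R)"
  shows "pairing R (sr \<alpha> \<gamma>) y = pairing R \<gamma> y - pairing R \<gamma> (coroot R \<alpha>) * pairing R \<alpha> y"
proof -
  have a: "\<alpha> \<in> carrier (lat R)" using assms roots_sub by auto
  show ?thesis unfolding sr_def
    using p_mult1[OF assms(2) _ assms(3)] p_ipow1[OF a assms(3)] group.int_pow_closed[OF gX a] by simp
qed

lemma sr_sr: assumes "\<alpha> \<in> roots R" "\<gamma> \<in> carrier (lat R)" shows "sr \<alpha> (sr \<alpha> \<gamma>) = \<gamma>"
proof -
  have a: "\<alpha> \<in> carrier (lat R)" using assms roots_sub by auto
  have c: "coroot R \<alpha> \<in> carrier (colat R)" using coroots_sub assms by auto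
  define k where "k = pairing R \<gamma> (coroot R \<alpha>)"
  have "pairing R (sr \<alpha> \<gamma>) (coroot R \<alpha>) = - k"
    using sr_pair[OF assms c] p_two[OF assms(1)] by (simp add: k_def)
  then have "sr \<alpha> (sr \<alpha> \<gamma>) = (\<gamma> \<otimes>\<^bsub>lat R\<^esub> \<alpha> [^]\<^bsub>lat R\<^esub> (- k)) \<otimes>\<^bsub>lat R\<^esub> \<alpha> [^]\<^bsub>lat R\<^esub> k"
    by (simp add: sr_def k_def)
  also have "\<dots> = \<gamma> \<otimes>\<^bsub>lat R\<^esub> (\<alpha> [^]\<^bsub>lat R\<^esub> (- k) \<otimes>\<^bsub>lat R\<^esub> \<alpha> [^]\<^bsub>lat R\<^esub> k)"
    using gX a assms(2) by (simp add: group.int_pow_closed monoid.m_assoc group.is_monoid)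
  also have "\<dots> = \<gamma> \<otimes>\<^bsub>lat R\<^esub> \<alpha> [^]\<^bsub>lat R\<^esub> (- k + k)"
    using group.int_pow_mult[OF gX a, of "-k" k] by simp
  also have "\<dots> = \<gamma>" using gX assms(2) by (simp add: monoid.r_one group.is_monoid)
  finally show ?thesis .
qed

lemma sr_bij: assumes "\<alpha> \<in> roots R" shows "bij_betw (sr \<alpha>) (roots R) (roots R)"
proof (rule bij_betw_byWitness[where f'="sr \<alpha>"])
  show "\<forall>a\<in>roots R. sr \<alpha> (sr \<alpha> a) = a" using sr_sr assms roots_sub by auto
  show "\<forall>a\<in>roots R. sr \<alpha> (sr \<alpha> a) = a" using sr_sr assms roots_sub by auto
  show "sr \<alpha> ` roots R \<subseteq> roots R" using refl_in assms by (auto simp: sr_def)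
  show "sr \<alpha> ` roots R \<subseteq> roots R" using refl_in assms by (auto simp: sr_def)
qed

lemma Bv_key: assumes "\<alpha> \<in> roots R" "y \<in> carrier (colat R)"
  shows "2 * Bv (coroot R \<alpha>) y = Bv (coroot R \<alpha>) (coroot R \<alpha>) * pairing R \<alpha> y"
proof -
  have c: "coroot R \<alpha> \<in> carrier (colat R)" using coroots_sub assms by auto
  let ?k = "\<lambda>\<gamma>. pairing R \<gamma> (coroot R \<alpha>)"
  have "Bv (coroot R \<alpha>) y = (\<Sum>\<gamma>\<in>roots R. pairing R (sr \<alpha> \<gamma>) (coroot R \<alpha>) * pairing R (sr \<alpha> \<gamma>) y)"
    unfolding Bv_def using sum.reindex_bij_betw[OF sr_bij[OF assms(1)],
      of "\<lambda>\<gamma>. pairing R \<gamma> (coroot R \<alpha>) * pairing R \<gamma> y"] by simp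
  also have "\<dots> = (\<Sum>\<gamma>\<in>roots R. (?k \<gamma> * ?k \<gamma>) * pairing R \<alpha> y - ?k \<gamma> * pairing R \<gamma> y)"
  proof (rule sum.cong)
    fix \<gamma> assume g: "\<gamma> \<in> roots R"
    then have gc: "\<gamma> \<in> carrier (lat R)" using roots_sub by auto
    show "pairing R (sr \<alpha> \<gamma>) (coroot R \<alpha>) * pairing R (sr \<alpha> \<gamma>) y = (?k \<gamma> * ?k \<gamma>) * pairing R \<alpha> y - ?k \<gamma> * pairing R \<gamma> y"
      unfolding sr_pair[OF assms(1) gc c] sr_pair[OF assms(1) gc assms(2)] p_two[OF assms(1)]
      by (simp add: algebra_simps)
  qed simp
  also have "\<dots> = Bv (coroot R \<alpha>) (coroot R \<alpha>) * pairing R \<alpha> y - Bv (coroot R \<alpha>) y"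
    by (simp add: Bv_def sum_subtractf sum_distrib_right)
  finally show ?thesis by simp
qed

lemma Bv_pos: assumes "\<alpha> \<in> roots R" shows "Bv (coroot R \<alpha>) (coroot R \<alpha>) > 0"
proof -
  have "pairing R \<alpha> (coroot R \<alpha>) * pairing R \<alpha> (coroot R \<alpha>) \<le> Bv (coroot R \<alpha>) (coroot R \<alpha>)"
    unfolding Bv_def by (rule member_le_sum) (use assms fin in auto)
  then show ?thesis using p_two[OF assms] by simp
qed

lemma Bv_mult: assumes "w1 \<in> carrier (colat R)" "w2 \<in> carrier (colat R)"
  shows "Bv (w1 \<otimes>\<^bsub>colat R\<^esub> w2) y = Bv w1 y + Bv w2 y"
proof -
  have "Bv (w1 \<otimes>\<^bsub>colat R\<^esub> w2) y = (\<Sum>\<gamma>\<in>roots R. pairing R \<gamma> w1 * pairing R \<gamma> y + pairing R \<gamma> w2 * pairing R \<gamma> y)"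
    unfolding Bv_def
  proof (rule sum.cong[OF refl])
    fix \<gamma> assume "\<gamma> \<in> roots R"
    then have g: "\<gamma> \<in> carrier (lat R)" using roots_sub by blast
    show "pairing R \<gamma> (w1 \<otimes>\<^bsub>colat R\<^esub> w2) * pairing R \<gamma> y = pairing R \<gamma> w1 * pairing R \<gamma> y + pairing R \<gamma> w2 * pairing R \<gamma> y"
      unfolding p_mult2[OF g assms] by (rule distrib_right)
  qed
  then show ?thesis by (simp only: Bv_def sum.distrib)
qed

lemma Bv_inv: assumes "w \<in> carrier (colat R)" shows "Bv (inv\<^bsub>colat R\<^esub> w) y = - Bv w y"
proof -
  have "Bv (inv\<^bsub>colat R\<^esub> w) y = (\<Sum>\<gamma>\<in>roots R. - (pairing R \<gamma> w * pairing R \<gamma> y))"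
    unfolding Bv_def
  proof (rule sum.cong[OF refl])
    fix \<gamma> assume "\<gamma> \<in> roots R"
    then have g: "\<gamma> \<in> carrier (lat R)" using roots_sub by blast
    show "pairing R \<gamma> (inv\<^bsub>colat R\<^esub> w) * pairing R \<gamma> y = - (pairing R \<gamma> w * pairing R \<gamma> y)"
      unfolding p_inv2[OF g assms] by (rule mult_minus_left)
  qed
  then show ?thesis by (simp only: Bv_def sum_negf)
qed

lemma Bv_pow: assumes "w \<in> carrier (colat R)" shows "Bv (w [^]\<^bsub>colat R\<^esub> (k::int)) y = k * Bv w y"
proof -
  have "Bv (w [^]\<^bsub>colat R\<^esub> k) y = (\<Sum>\<gamma>\<in>roots R. k * (pairing R \<gamma> w * pairing R \<gamma> y))"
    unfolding Bv_def
  proof (rule sum.cong[OF refl])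
    fix \<gamma> assume "\<gamma> \<in> roots R"
    then have g: "\<gamma> \<in> carrier (lat R)" using roots_sub by blast
    show "pairing R \<gamma> (w [^]\<^bsub>colat R\<^esub> k) * pairing R \<gamma> y = k * (pairing R \<gamma> w * pairing R \<gamma> y)"
      unfolding p_ipow2[OF g assms] by (rule mult.assoc)
  qed
  then show ?thesis by (simp only: Bv_def sum_distrib_left)
qed

lemma Bv_one: "Bv \<one>\<^bsub>colat R\<^esub> y = 0"
  unfolding Bv_def
proof (rule sum.neutral, rule ballI)
  fix \<gamma> assume "\<gamma> \<in> roots R"
  then have g: "\<gamma> \<in> carrier (lat R)" using roots_sub by blast
  show "pairing R \<gamma> \<one>\<^bsub>colat R\<^esub> * pairing R \<gamma> y = 0" using p_one2[OF g] by simp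
qed

lemma coroots_sub': "coroots R \<subseteq> carrier (colat R)" using coroots_sub by (auto simp: coroots_def)
lemma genY_sub: "generate (colat R) (coroots R) \<subseteq> carrier (colat R)"
  using group.generate_incl[OF gY coroots_sub'] .
lemma genX_sub: "generate (lat R) (roots R) \<subseteq> carrier (lat R)"
  using group.generate_incl[OF gX] roots_sub by auto

lemma gen_claim: "z \<in> generate (lat R) (roots R) \<Longrightarrow>
  \<exists>M>0. \<exists>w\<in>generate (colat R) (coroots R). \<forall>y\<in>carrier (colat R). M * pairing R z y = Bv w y"
proof (induction rule: generate.induct)
  case one
  show ?case by (rule exI[of _ 1]) (auto intro!: bexI[of _ "\<one>\<^bsub>colat R\<^esub>"] generate.one simp: p_one1 Bv_one)
next
  case (incl h)
  have c: "coroot R h \<in> carrier (colat R)" using coroots_sub incl by auto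
  show ?case
    apply (rule exI[of _ "Bv (coroot R h) (coroot R h)"])
    apply (rule conjI, rule Bv_pos[OF incl])
    apply (rule bexI[of _ "coroot R h \<otimes>\<^bsub>colat R\<^esub> coroot R h"])
    using Bv_key[OF incl] Bv_mult[OF c c] apply (simp add: mult.commute)
    by (rule generate.eng; rule generate.incl; use incl in \<open>auto simp: coroots_def\<close>)
next
  case (inv h)
  have c: "coroot R h \<in> carrier (colat R)" using coroots_sub inv by auto
  have hx: "h \<in> carrier (lat R)" using roots_sub inv by auto
  have ic: "inv\<^bsub>colat R\<^esub> coroot R h \<in> carrier (colat R)" using c gY by (simp add: group.inv_closed)
  show ?case
    apply (rule exI[of _ "Bv (coroot R h) (coroot R h)"])
    apply (rule conjI, rule Bv_pos[OF inv])
    apply (rule bexI[of _ "inv\<^bsub>colat R\<^esub> coroot R h \<otimes>\<^bsub>colat R\<^esub> inv\<^bsub>colat R\<^esub> coroot R h"])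
    using Bv_key[OF inv] Bv_mult[OF ic ic] Bv_inv[OF c] p_inv1[OF hx] apply (simp add: mult.commute)
    by (rule generate.eng; rule generate.inv; use inv in \<open>auto simp: coroots_def\<close>)
next
  case (eng h1 h2)
  from eng.IH obtain M1 w1 M2 w2 where m: "M1 > 0" "M2 > 0"
    and w: "w1 \<in> generate (colat R) (coroots R)" "w2 \<in> generate (colat R) (coroots R)"
    and e: "\<forall>y\<in>carrier (colat R). M1 * pairing R h1 y = Bv w1 y"
           "\<forall>y\<in>carrier (colat R). M2 * pairing R h2 y = Bv w2 y" by blast
  have sg: "subgroup (generate (colat R) (coroots R)) (colat R)"
    using group.generate_is_subgroup[OF gY coroots_sub'] .
  have wc: "w1 \<in> carrier (colat R)" "w2 \<in> carrier (colat R)" using w genY_sub by auto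
  have hc: "h1 \<in> carrier (lat R)" "h2 \<in> carrier (lat R)" using eng.hyps genX_sub by auto
  show ?case
  proof (intro exI[of _ "M1 * M2"] conjI bexI[of _ "w1 [^]\<^bsub>colat R\<^esub> M2 \<otimes>\<^bsub>colat R\<^esub> w2 [^]\<^bsub>colat R\<^esub> M1"] ballI)
    show "0 < M1 * M2" using m by simp
    show "w1 [^]\<^bsub>colat R\<^esub> M2 \<otimes>\<^bsub>colat R\<^esub> w2 [^]\<^bsub>colat R\<^esub> M1 \<in> generate (colat R) (coroots R)"
      using w group.subgroup_int_pow_closed[OF gY sg] by (auto intro!: generate.eng)
    fix y assume y: "y \<in> carrier (colat R)"
    have pc: "w1 [^]\<^bsub>colat R\<^esub> M2 \<in> carrier (colat R)" "w2 [^]\<^bsub>colat R\<^esub> M1 \<in> carrier (colat R)"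
      using wc gY by (auto simp: group.int_pow_closed)
    show "M1 * M2 * pairing R (h1 \<otimes>\<^bsub>lat R\<^esub> h2) y = Bv (w1 [^]\<^bsub>colat R\<^esub> M2 \<otimes>\<^bsub>colat R\<^esub> w2 [^]\<^bsub>colat R\<^esub> M1) y"
      using Bv_mult[OF pc] Bv_pow[OF wc(1)] Bv_pow[OF wc(2)] e[rule_format, OF y] p_mult1[OF hc y]
      by (simp add: algebra_simps)
  qed
qed

lemma key: assumes x: "x \<in> carrier (lat R)" and n: "n > 0"
  and g: "x [^]\<^bsub>lat R\<^esub> (n::nat) \<in> generate (lat R) (roots R)"
  and o: "\<And>\<gamma>. \<gamma> \<in> roots R \<Longrightarrow> pairing R x (coroot R \<gamma>) = 0"
  shows "x = \<one>\<^bsub>lat R\<^esub>"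
proof -
  define z where "z = x [^]\<^bsub>lat R\<^esub> n"
  have zc: "z \<in> carrier (lat R)" using z_def x gX by (simp add: monoid.nat_pow_closed group.is_monoid)
  obtain M w where M: "M > 0" and w: "w \<in> generate (colat R) (coroots R)"
    and e: "\<forall>y\<in>carrier (colat R). M * pairing R z y = Bv w y" using gen_claim g z_def by blast
  have z0: "pairing R z (coroot R \<gamma>) = 0" if "\<gamma> \<in> roots R" for \<gamma>
    using p_npow1[OF x coroots_sub[OF that], of n] o[OF that] z_def by simp
  have orth: "pairing R z w' = 0" if "w' \<in> generate (colat R) (coroots R)" for w'
    using that
  proof (induction rule: generate.induct)
    case one then show ?case using p_one2 zc by simp
  next
    case (incl h) then obtain \<gamma> where "\<gamma> \<in> roots R" "h = coroot R \<gamma>" by (auto simp: coroots_def)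
    then show ?case using z0 by simp
  next
    case (inv h) then show ?case using p_inv2[OF zc, of h] coroots_sub z0 by (auto simp: coroots_def)
  next
    case (eng h1 h2) then show ?case using p_mult2[OF zc, of h1 h2] genY_sub by auto
  qed
  have wc: "w \<in> carrier (colat R)" using w genY_sub by auto
  have "Bv w w = 0" using e wc orth[OF w] by auto
  then have "\<forall>\<gamma>\<in>roots R. pairing R \<gamma> w * pairing R \<gamma> w = 0"
    unfolding Bv_def using fin by (subst (asm) sum_nonneg_eq_0_iff) auto
  then have "\<And>y. Bv w y = 0" unfolding Bv_def by simp
  then have "\<And>y. y \<in> carrier (colat R) \<Longrightarrow> pairing R z y = 0" using e M by auto
  then have "\<And>y. y \<in> carrier (colat R) \<Longrightarrow> pairing R x y = 0" using p_npow1[OF x] n z_def by auto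
  then show ?thesis using nondeg x by blast
qed

end


lemma span_top_subgroup:
  fixes G (structure)
  assumes G: "comm_group G" and S: "S \<subseteq> carrier G"
  shows "subgroup (span_top G S) G"
proof -
  interpret comm_group G by fact
  have sg: "subgroup (generate G S) G" using generate_is_subgroup[OF S] .
  have npow: "a [^] (k::nat) \<in> generate G S" if "a \<in> generate G S" for a k
    using subgroup_int_pow_closed[OF sg that, of "int k"] by (simp add: int_pow_int)
  show ?thesis
  proof (rule subgroupI)
    show "span_top G S \<subseteq> carrier G" by (auto simp: span_top_def)
    have "\<one> \<in> span_top G S" unfolding span_top_def using generate.one[of G S] by (auto intro!: exI[of _ 1])
    then show "span_top G S \<noteq> {}" by blast
  next
    fix a assume a: "a \<in> span_top G S"
    then have "a \<in> carrier G" "\<exists>n::nat>0. a [^] n \<in> generate G S" by (auto simp: span_top_def)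
    then obtain n :: nat where n: "n>0" "a [^] n \<in> generate G S" "a \<in> carrier G" by blast
    have "inv a [^] n = inv (a [^] n)" using nat_pow_inv n by simp
    then show "inv a \<in> span_top G S" using n subgroup.m_inv_closed[OF sg] by (auto simp: span_top_def)
  next
    fix a b assume a: "a \<in> span_top G S" and b: "b \<in> span_top G S"
    have "a \<in> carrier G" "\<exists>n::nat>0. a [^] n \<in> generate G S" using a by (auto simp: span_top_def)
    then obtain n :: nat where n: "n>0" "a [^] n \<in> generate G S" "a \<in> carrier G" by blast
    have "b \<in> carrier G" "\<exists>n::nat>0. b [^] n \<in> generate G S" using b by (auto simp: span_top_def)
    then obtain m :: nat where m: "m>0" "b [^] m \<in> generate G S" "b \<in> carrier G" by blast
    have "(a \<otimes> b) [^] (n*m) = a [^] (n*m) \<otimes> b [^] (n*m)"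
      using pow_mult_distrib[OF m_comm[OF n(3) m(3)] n(3) m(3)] by simp
    also have "\<dots> = (a [^] n) [^] m \<otimes> (b [^] m) [^] n"
      using nat_pow_pow[OF n(3), of n m] nat_pow_pow[OF m(3), of m n] by (simp add: mult.commute)
    finally have "(a \<otimes> b) [^] (n*m) \<in> generate G S"
      using npow[OF n(2)] npow[OF m(2)] subgroup.m_closed[OF sg] by simp
    moreover have "n * m > 0" using n m by simp
    moreover have "a \<otimes> b \<in> carrier G" using n m by simp
    ultimately show "a \<otimes> b \<in> span_top G S" unfolding span_top_def by blast
  qed
qed

lemma transpose_prop:
  assumes R1: "rdat R1" and R2: "rdat R2" and fh: "f \<in> hom (lat R2) (lat R1)"
    and y: "y \<in> carrier (colat R1)"
  shows "transpose R2 R1 f y \<in> carrier (colat R2) \<and>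
    (\<forall>x\<in>carrier (lat R2). pairing R2 x (transpose R2 R1 f y) = pairing R1 (f x) y)"
proof -
  have "(\<lambda>x. pairing R1 (f x) y) \<in> hom (lat R2) integer_group"
    using fh rdat.p_mult1[OF R1] y by (auto simp: hom_def)
  then have "\<exists>!y'. y' \<in> carrier (colat R2) \<and> (\<forall>x\<in>carrier (lat R2). pairing R2 x y' = pairing R1 (f x) y)"
    using rdat.PP[OF R2] by (auto simp: perfect_pairing_def)
  then show ?thesis unfolding transpose_def by (rule theI')
qed

theorem mainTheorem6:
  fixes R1 :: "('a, 'c) root_datum" and R2 :: "('b, 'd) root_datum"
    and f :: "'b \<Rightarrow> 'a" and \<tau> :: "'a \<Rightarrow> 'b"
  assumes "is_reduced_root_datum R1" and "is_reduced_root_datum R2"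
    and "root_hom R2 R1 f \<tau>"
    and "f ` carrier (lat R2) = carrier (lat R1)"
  shows "let T = span_top (lat R2) (roots R2);
             A = lat R1 Mod (f ` T);
             h1 = (\<lambda>x. (f ` T) #>\<^bsub>lat R1\<^esub> x);
             h2 = (\<lambda>C. (f ` T) #>\<^bsub>lat R1\<^esub> f (SOME x. x \<in> C));
             \<phi> = (\<lambda>x. (f x, T #>\<^bsub>lat R2\<^esub> x))
         in (\<exists>\<sigma>. root_iso R2 (central_prod R1 (rad R2) A h1 h2) \<phi> \<sigma>) \<and>
            (\<forall>x\<in>carrier (lat R2). fst (\<phi> x) = f x)"
proof -
  have R1: "rdat R1" using assms(1) by (simp add: rdat_def is_reduced_root_datum_def)
  have R2: "rdat R2" using assms(2) by (simp add: rdat_def is_reduced_root_datum_def)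
  interpret r1: rdat R1 by (rule R1)
  interpret r2: rdat R2 by (rule R2)
  interpret g1: comm_group "lat R1" by (rule r1.cgX)
  interpret g2: comm_group "lat R2" by (rule r2.cgX)
  have fhom: "f \<in> hom (lat R2) (lat R1)" and taubij: "bij_betw \<tau> (roots R1) (roots R2)"
    and tau: "\<And>a. a \<in> roots R1 \<Longrightarrow> f (\<tau> a) = a \<and> transpose R2 R1 f (coroot R1 a) = coroot R2 (\<tau> a)"
    using assms(3) by (auto simp: root_hom_def)
  interpret gh: group_hom "lat R2" "lat R1" f
    using fhom by (simp add: group_hom_def group_hom_axioms_def r1.gX r2.gX)
  define T where "T = span_top (lat R2) (roots R2)"
  define fT where "fT = f ` T"
  define B where "B = {(x, C). x \<in> carrier (lat R1) \<and> C \<in> carrier (lat R2 Mod T) \<and>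
        fT #>\<^bsub>lat R1\<^esub> x = fT #>\<^bsub>lat R1\<^esub> f (SOME y. y \<in> C)}"
  define CP where "CP = central_prod R1 (rad R2) (lat R1 Mod fT) (\<lambda>x. fT #>\<^bsub>lat R1\<^esub> x)
        (\<lambda>C. fT #>\<^bsub>lat R1\<^esub> f (SOME x. x \<in> C))"
  define \<phi> where "\<phi> = (\<lambda>x. (f x, T #>\<^bsub>lat R2\<^esub> x))"
  have sT: "subgroup T (lat R2)" unfolding T_def by (rule span_top_subgroup[OF r2.cgX r2.roots_sub])
  have sfT: "subgroup fT (lat R1)" unfolding fT_def by (rule gh.subgroup_img_is_subgroup[OF sT])
  have nT: "normal T (lat R2)" by (rule g2.subgroup_imp_normal[OF sT])
  have TC: "T \<subseteq> carrier (lat R2)" using sT subgroup.subset by blast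
  have rootsT: "roots R2 \<subseteq> T" unfolding T_def span_top_def using r2.roots_sub
    by (auto intro!: exI[of _ 1] generate.incl)
  have latCP: "lat CP = (lat R1 \<times>\<times> (lat R2 Mod T))\<lparr>carrier := B\<rparr>"
    by (simp add: CP_def central_prod_def induced_def dsum_def rad_def B_def T_def)
  have rootsCP: "roots CP = (\<lambda>a. (a, T)) ` roots R1"
    by (simp add: CP_def central_prod_def induced_def dsum_def rad_def T_def FactGroup_def)
  have pairCP: "pairing CP = (\<lambda>b \<phi>. \<phi> b)"
    by (simp add: CP_def central_prod_def induced_def)
  have corootCP: "coroot CP (a, T) = (\<lambda>b. if b \<in> B then pairing R1 (fst b) (coroot R1 a)
        + pairing R2 (SOME x. x \<in> snd b) \<one>\<^bsub>colat R2\<^esub> else 0)" if "a \<in> roots R1" for a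
    using that by (auto simp add: CP_def central_prod_def induced_def dsum_def rad_def B_def T_def FactGroup_def split: prod.splits)
  have gen_car: "(SOME y. y \<in> T #>\<^bsub>lat R2\<^esub> x) \<in> T #>\<^bsub>lat R2\<^esub> x" if "x \<in> carrier (lat R2)" for x
    using g2.rcos_self[OF that sT] by (rule someI)
  have coset_car: "T #>\<^bsub>lat R2\<^esub> x \<subseteq> carrier (lat R2)" if "x \<in> carrier (lat R2)" for x
    using g2.r_coset_subset_G[OF TC that] .
  have phiB: "\<phi> x \<in> B" if x: "x \<in> carrier (lat R2)" for x
  proof -
    let ?y = "SOME y. y \<in> T #>\<^bsub>lat R2\<^esub> x"
    have y: "?y \<in> T #>\<^bsub>lat R2\<^esub> x" by (rule gen_car[OF x])
    have yc: "?y \<in> carrier (lat R2)" using y coset_car[OF x] by blast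
    have t: "?y \<otimes>\<^bsub>lat R2\<^esub> inv\<^bsub>lat R2\<^esub> x \<in> T" using subgroup.rcos_module_imp[OF sT r2.gX x y] .
    have "f (?y \<otimes>\<^bsub>lat R2\<^esub> inv\<^bsub>lat R2\<^esub> x) = f ?y \<otimes>\<^bsub>lat R1\<^esub> inv\<^bsub>lat R1\<^esub> f x"
      using x yc by simp
    then have "f ?y \<otimes>\<^bsub>lat R1\<^esub> inv\<^bsub>lat R1\<^esub> f x \<in> fT" using t unfolding fT_def by (metis imageI)
    then have "f ?y \<in> fT #>\<^bsub>lat R1\<^esub> f x"
      using subgroup.rcos_module_rev[OF sfT r1.gX] x yc by simp
    then have "fT #>\<^bsub>lat R1\<^esub> f x = fT #>\<^bsub>lat R1\<^esub> f ?y"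
      using g1.repr_independence[OF _ _ sfT] x by simp
    moreover have "T #>\<^bsub>lat R2\<^esub> x \<in> carrier (lat R2 Mod T)"
      using g2.rcosetsI[OF TC x] by (simp add: FactGroup_def)
    ultimately show ?thesis using x by (simp add: B_def \<phi>_def)
  qed
  have phihom: "\<phi> \<in> hom (lat R2) (lat CP)"
  proof (rule homI)
    show "\<phi> x \<in> carrier (lat CP)" if "x \<in> carrier (lat R2)" for x using phiB[OF that] latCP by simp
    fix x y assume x: "x \<in> carrier (lat R2)" and y: "y \<in> carrier (lat R2)"
    show "\<phi> (x \<otimes>\<^bsub>lat R2\<^esub> y) = \<phi> x \<otimes>\<^bsub>lat CP\<^esub> \<phi> y"
      using normal.rcos_sum[OF nT x y] x y by (simp add: latCP \<phi>_def FactGroup_def)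
  qed
  have inj: "inj_on \<phi> (carrier (lat R2))"
  proof (rule inj_onI)
    fix x y assume x: "x \<in> carrier (lat R2)" and y: "y \<in> carrier (lat R2)" and e: "\<phi> x = \<phi> y"
    then have fe: "f x = f y" and ce: "T #>\<^bsub>lat R2\<^esub> x = T #>\<^bsub>lat R2\<^esub> y" by (auto simp: \<phi>_def)
    have "x \<in> T #>\<^bsub>lat R2\<^esub> y" using g2.repr_independenceD[OF sT x ce[symmetric]] .
    then have tT: "x \<otimes>\<^bsub>lat R2\<^esub> inv\<^bsub>lat R2\<^esub> y \<in> T" using subgroup.rcos_module_imp[OF sT r2.gX y] by blast
    define t where "t = x \<otimes>\<^bsub>lat R2\<^esub> inv\<^bsub>lat R2\<^esub> y"
    have tc: "t \<in> carrier (lat R2)" using x y by (simp add: t_def)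
    have ft: "f t = \<one>\<^bsub>lat R1\<^esub>" using x y fe by (simp add: t_def)
    have "t \<in> span_top (lat R2) (roots R2)" using tT by (simp add: t_def T_def)
    then obtain n :: nat where n: "n > 0" "t [^]\<^bsub>lat R2\<^esub> n \<in> generate (lat R2) (roots R2)"
      unfolding span_top_def by blast
    have o: "pairing R2 t (coroot R2 \<gamma>) = 0" if g: "\<gamma> \<in> roots R2" for \<gamma>
    proof -
      obtain a where a: "a \<in> roots R1" "\<gamma> = \<tau> a" using taubij g by (auto simp: bij_betw_def)
      have "pairing R2 t (coroot R2 \<gamma>) = pairing R1 (f t) (coroot R1 a)"
        using transpose_prop[OF R1 R2 fhom r1.coroots_sub[OF a(1)]] tau[OF a(1)] a(2) tc by auto
      then show ?thesis using ft r1.p_one1[OF r1.coroots_sub[OF a(1)]] by simp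
    qed
    have "t = \<one>\<^bsub>lat R2\<^esub>" using r2.key[OF tc n o] .
    then show "x = y" using x y by (metis t_def g2.inv_solve_right g2.l_one g2.one_closed)
  qed
  have surj: "\<phi> ` carrier (lat R2) = B"
  proof
    show "\<phi> ` carrier (lat R2) \<subseteq> B" using phiB by blast
  next
    show "B \<subseteq> \<phi> ` carrier (lat R2)"
    proof
      fix b assume "b \<in> B"
      then obtain a C where b: "b = (a, C)" and a: "a \<in> carrier (lat R1)"
        and C: "C \<in> rcosets\<^bsub>lat R2\<^esub> T"
        and e: "fT #>\<^bsub>lat R1\<^esub> a = fT #>\<^bsub>lat R1\<^esub> f (SOME y. y \<in> C)"
        by (auto simp: B_def FactGroup_def)
      obtain c0 where c0: "c0 \<in> carrier (lat R2)" "C = T #>\<^bsub>lat R2\<^esub> c0"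
        using C by (auto simp: RCOSETS_def)
      let ?c = "SOME y. y \<in> C"
      have cC: "?c \<in> C" using gen_car[OF c0(1)] c0(2) by simp
      have cc: "?c \<in> carrier (lat R2)" using cC c0 coset_car by blast
      have Cc: "C = T #>\<^bsub>lat R2\<^esub> ?c" using g2.repr_independence[OF _ c0(1) sT] cC c0(2) by simp
      have fcc: "f ?c \<in> carrier (lat R1)" using cc by simp
      have "a \<in> fT #>\<^bsub>lat R1\<^esub> f ?c" using g1.repr_independenceD[OF sfT a e[symmetric]] .
      then have "a \<otimes>\<^bsub>lat R1\<^esub> inv\<^bsub>lat R1\<^esub> f ?c \<in> fT"
        using subgroup.rcos_module_imp[OF sfT r1.gX fcc] by blast
      then obtain t where t: "t \<in> T" "f t = a \<otimes>\<^bsub>lat R1\<^esub> inv\<^bsub>lat R1\<^esub> f ?c" unfolding fT_def by auto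
      have tc: "t \<in> carrier (lat R2)" using t TC by blast
      have "f (t \<otimes>\<^bsub>lat R2\<^esub> ?c) = a"
        using tc cc fcc a t(2) by (simp add: g1.m_assoc)
      moreover have "T #>\<^bsub>lat R2\<^esub> (t \<otimes>\<^bsub>lat R2\<^esub> ?c) = C"
        using Cc g2.coset_mult_assoc[OF TC tc cc] g2.coset_join2[OF tc sT t(1)] by simp
      moreover have "t \<otimes>\<^bsub>lat R2\<^esub> ?c \<in> carrier (lat R2)" using tc cc by simp
      ultimately show "b \<in> \<phi> ` carrier (lat R2)" using b unfolding \<phi>_def by force
    qed
  qed
  define \<sigma> where "\<sigma> = (\<lambda>(a::'a, C::'b set). \<tau> a)"
  have sbij: "bij_betw \<sigma> (roots CP) (roots R2)"
    using taubij unfolding rootsCP bij_betw_def inj_on_def \<sigma>_def by (auto simp: image_image)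
  have rootcond: "\<phi> (\<sigma> \<alpha>) = \<alpha> \<and> transpose R2 CP \<phi> (coroot CP \<alpha>) = coroot R2 (\<sigma> \<alpha>)"
    if al: "\<alpha> \<in> roots CP" for \<alpha>
  proof -
    obtain a where a: "a \<in> roots R1" "\<alpha> = (a, T)" using al rootsCP by auto
    have ta: "\<tau> a \<in> roots R2" using taubij a(1) by (auto simp: bij_betw_def)
    have tac: "\<tau> a \<in> carrier (lat R2)" using ta r2.roots_sub by blast
    have "\<phi> (\<sigma> \<alpha>) = \<alpha>"
      using tau[OF a(1)] g2.coset_join2[OF tac sT] rootsT ta a(2) by (auto simp: \<phi>_def \<sigma>_def)
    moreover have "transpose R2 CP \<phi> (coroot CP \<alpha>) = transpose R2 R1 f (coroot R1 a)"
      unfolding transpose_def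
    proof (rule arg_cong[where f=The], rule ext, rule conj_cong[OF refl], rule ball_cong[OF refl])
      fix y' x assume x: "x \<in> carrier (lat R2)"
      have sc: "(SOME y. y \<in> T #>\<^bsub>lat R2\<^esub> x) \<in> carrier (lat R2)" using gen_car[OF x] coset_car[OF x] by blast
      show "(pairing R2 x y' = pairing CP (\<phi> x) (coroot CP \<alpha>)) = (pairing R2 x y' = pairing R1 (f x) (coroot R1 a))"
        using phiB[OF x] r2.p_one2[OF sc] by (simp add: pairCP corootCP[OF a(1)] a(2) \<phi>_def)
    qed
    ultimately show ?thesis using tau[OF a(1)] a by (simp add: \<sigma>_def)
  qed
  have main: "root_iso R2 CP \<phi> \<sigma>"
    unfolding root_iso_def root_hom_def
  proof (intro conjI ballI)
    show "\<phi> \<in> hom (lat R2) (lat CP)" by (rule phihom)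
    show "bij_betw \<sigma> (roots CP) (roots R2)" by (rule sbij)
    fix \<alpha> assume "\<alpha> \<in> roots CP"
    then show "\<phi> (\<sigma> \<alpha>) = \<alpha>" "transpose R2 CP \<phi> (coroot CP \<alpha>) = coroot R2 (\<sigma> \<alpha>)"
      using rootcond by blast+
  next
    have "carrier (lat CP) = B" unfolding latCP by simp
    then show "bij_betw \<phi> (carrier (lat R2)) (carrier (lat CP))"
      unfolding bij_betw_def using inj surj by blast
  qed
  show ?thesis unfolding Let_def
  proof (rule conjI)
    show "\<exists>\<sigma>. root_iso R2 (central_prod R1 (rad R2) (lat R1 Mod f ` span_top (lat R2) (roots R2))
       (\<lambda>x. f ` span_top (lat R2) (roots R2) #>\<^bsub>lat R1\<^esub> x)
       (\<lambda>C. f ` span_top (lat R2) (roots R2) #>\<^bsub>lat R1\<^esub> f (SOME x. x \<in> C)))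
       (\<lambda>x. (f x, span_top (lat R2) (roots R2) #>\<^bsub>lat R2\<^esub> x)) \<sigma>"
      using main unfolding CP_def \<phi>_def fT_def T_def by blast
    show "\<forall>x\<in>carrier (lat R2). fst (f x, span_top (lat R2) (roots R2) #>\<^bsub>lat R2\<^esub> x) = f x" by simp
  qed
qed

end
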